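(* Let $d \geq 0$ be an integer and $\rho > 0$. Let $\mathsf{S}$ be a random sprinkle of density $\rho$ in $(1+d)$-dimensional Minkowski spacetime $\mathbb{M}^{1+d}$, regarded as a poset with the induced causal order. Then, with probability $1$, $\mathsf{S}$ is total locally unsymmetric; that is, almost surely, for every finite subset $F \subseteq \mathsf{S}$, every automorphism of the poset $\mathsf{S} \setminus F$ that moves only finitely many elements is the identity.
   Context: Minkowski spacetime $\mathbb{M}^{1+d} = \mathbb{R}^{1+d}$ with coordinates $(t, x_1,\dots,x_d)$, volume measure $\nu$ the Lebesgue measure, and causal partial order $p \preceq q$ iff $q - p$ is future-directed causal or zero (i.e. $q_0 - p_0 \geq \sqrt{\sum_{i=1}^d (q_i-p_i)^2}$). A sprinkle of density $\rho>0$ is a realisation of the Poisson point process on $\mathbb{M}^{1+d}$ with intensity $\rho\,\nu$: it is a random locally finite subset $\mathsf{S}$ (finite intersection with every compact set) such that for every precompact region $K$, the probability that $\mathsf{S}\cap K$ has exactly $n$ points is $e^{-\rho\nu(K)}\frac{(\rho\nu(K))^n}{n!}$, with points of disjoint regions independent (equivalently, for measurable $B_n$ in the space of $n$-point subsets of $K$, $\mu_K(B_n) = e^{-\rho\nu(K)}\frac{\rho^n}{n!}\nu^n(\Sigma_{K,n}^{-1}(B_n))$, where $\Sigma_{K,n}$ maps $n$-tuples of distinct points of $K$ to the corresponding $n$-element set). The sprinkle is a poset with the restriction of $\preceq$. For a poset $P$, an automorphism $\alpha$ of $P$ is a bijection $P\to P$ preserving and reflecting the order; an element $a$ is fixed if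 $\alpha(a)=a$. A local symmetry of $P$ is a non-identity automorphism of $P$ for which the set of non-fixed elements is finite. For $k \in \mathbb{N}_0$, a poset $P$ is $k$-stable locally unsymmetric if for every subset $S \subseteq P$ with $|S| \leq k$, the poset $P \setminus S$ (with the induced order) has no local symmetries. $P$ is total locally unsymmetric if it is $k$-stable locally unsymmetric for every finite $k \leq |P|$, i.e. removing any finite set of elements leaves a poset without local symmetries. *)

theory Defs
  imports "HOL-Probability.Probability"
begin

text \<open>Minkowski spacetime M^{1+d} is modelled as a Euclidean space 'a with DIM('a) = 1+d
  (so d = DIM('a) - 1 >= 0 is arbitrary), with a chosen basis vector e giving the time
  coordinate; the remaining basis vectors give the spatial coordinates.\<close>

definition causal_le :: "'a::euclidean_space \<Rightarrow> 'a \<Rightarrow> 'a \<Rightarrow> bool" where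
  "causal_le e p q \<longleftrightarrow> (q - p) \<bullet> e \<ge> norm ((q - p) - ((q - p) \<bullet> e) *\<^sub>R e)"

definition poset_automorphism :: "('a \<Rightarrow> 'a \<Rightarrow> bool) \<Rightarrow> 'a set \<Rightarrow> ('a \<Rightarrow> 'a) \<Rightarrow> bool" where
  "poset_automorphism le P \<alpha> \<longleftrightarrow>
     bij_betw \<alpha> P P \<and> (\<forall>x\<in>P. \<forall>y\<in>P. le x y \<longleftrightarrow> le (\<alpha> x) (\<alpha> y))"

definition local_symmetry :: "('a \<Rightarrow> 'a \<Rightarrow> bool) \<Rightarrow> 'a set \<Rightarrow> ('a \<Rightarrow> 'a) \<Rightarrow> bool" where
  "local_symmetry le P \<alpha> \<longleftrightarrow>
     poset_automorphism le P \<alpha> \<and> (\<exists>x\<in>P. \<alpha> x \<noteq> x) \<and> finite {x\<in>P. \<alpha> x \<noteq> x}"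

definition k_stable_locally_unsymmetric :: "('a \<Rightarrow> 'a \<Rightarrow> bool) \<Rightarrow> nat \<Rightarrow> 'a set \<Rightarrow> bool" where
  "k_stable_locally_unsymmetric le k P \<longleftrightarrow>
     (\<forall>F. F \<subseteq> P \<and> finite F \<and> card F \<le> k \<longrightarrow> \<not> (\<exists>\<alpha>. local_symmetry le (P - F) \<alpha>))"

definition total_locally_unsymmetric :: "('a \<Rightarrow> 'a \<Rightarrow> bool) \<Rightarrow> 'a set \<Rightarrow> bool" where
  "total_locally_unsymmetric le P \<longleftrightarrow> (\<forall>k::nat. k_stable_locally_unsymmetric le k P)"

text \<open>A sprinkle of density rho: a random locally finite subset S of 'a on the probability
  space M which is a Poisson point process with intensity rho times Lebesgue measure:
  counts in bounded Borel regions are Poisson distributed and counts in pairwise disjoint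
  bounded Borel regions are independent.\<close>

definition sprinkle :: "'w measure \<Rightarrow> real \<Rightarrow> ('w \<Rightarrow> 'a::euclidean_space set) \<Rightarrow> bool" where
  "sprinkle M \<rho> S \<longleftrightarrow>
     prob_space M \<and>
     (\<forall>\<omega>\<in>space M. \<forall>K. compact K \<longrightarrow> finite (S \<omega> \<inter> K)) \<and>
     (\<forall>K. K \<in> sets borel \<and> bounded K \<longrightarrow>
        (\<lambda>\<omega>. card (S \<omega> \<inter> K)) \<in> measurable M (count_space UNIV) \<and>
        (\<forall>n::nat. measure M {\<omega>\<in>space M. card (S \<omega> \<inter> K) = n} =
           exp (- \<rho> * measure lborel K) * (\<rho> * measure lborel K) ^ n / fact n)) \<and>
     (\<forall>(I::nat set) (K::nat \<Rightarrow> 'a set). finite I \<and> (\<forall>i\<in>I. K i \<in> sets borel \<and> bounded (K i))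
        \<and> disjoint_family_on K I \<longrightarrow>
        prob_space.indep_vars M (\<lambda>_. count_space UNIV) (\<lambda>i \<omega>. card (S \<omega> \<inter> K i)) I)"

end

theory Submission imports Defs begin


lemma subsingleton_finite: "(\<And>x y. x \<in> A \<Longrightarrow> y \<in> A \<Longrightarrow> x = y) \<Longrightarrow> finite A"
  by (metis finite.simps insertI1 subsetI finite_subset empty_iff singletonD finite.emptyI finite_insert subset_singletonD)

lemma prob_infinite:
  fixes S :: "'w \<Rightarrow> 'a::euclidean_space set" and c :: "nat \<Rightarrow> 'a"
  assumes sp: "sprinkle M \<rho> S" and rho: "\<rho> > 0" and r: "r > 0"
    and disj: "\<And>j k. j \<noteq> k \<Longrightarrow> ball (c j) r \<inter> ball (c k) r = {}"
    and sub: "\<And>k. ball (c k) r \<subseteq> R"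
  shows "AE \<omega> in M. infinite (S \<omega> \<inter> R)"
proof -
  interpret prob_space M using sp unfolding sprinkle_def by blast
  define V where "V = measure lborel (ball (0::'a) r)"
  have Vk: "measure lborel (ball (c k) r) = V" for k
    unfolding V_def using content_ball[of r "c k"] content_ball[of r "0::'a"] r by simp
  have Vpos: "V > 0" unfolding V_def using content_ball[of r "0::'a"] r by simp
  define U where "U N m = (\<Union>k\<in>{N..<N+m}. ball (c k) r)" for N m
  have Ub: "U N m \<in> sets borel" "bounded (U N m)" for N m
    unfolding U_def by auto
  have fin: "emeasure lborel (ball (c k) r) \<noteq> \<infinity>" for k
    using emeasure_lborel_ball_finite[of "c k" r] by simp
  have Um: "measure lborel (U N m) = real m * V" for N m
  proof -
    have "measure lborel (U N m) = (\<Sum>k\<in>{N..<N+m}. measure lborel (ball (c k) r))"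
      unfolding U_def
      apply (rule measure_finite_Union)
      apply simp
      apply auto[1]
      apply (auto simp: disjoint_family_on_def disj)[1]
      by (rule fin)
    then show ?thesis using Vk by simp
  qed
  define E where "E N m = {\<omega>\<in>space M. card (S \<omega> \<inter> U N m) = 0}" for N m
  have cnt: "(\<lambda>\<omega>. card (S \<omega> \<inter> U N m)) \<in> measurable M (count_space UNIV)"
    and pr: "measure M {\<omega>\<in>space M. card (S \<omega> \<inter> U N m) = n} =
           exp (- \<rho> * measure lborel (U N m)) * (\<rho> * measure lborel (U N m)) ^ n / fact n" for N m n
  proof -
    have A: "\<forall>K. K \<in> sets borel \<and> bounded K \<longrightarrow>
        (\<lambda>\<omega>. card (S \<omega> \<inter> K)) \<in> measurable M (count_space UNIV) \<and>
        (\<forall>n::nat. measure M {\<omega>\<in>space M. card (S \<omega> \<inter> K) = n} =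
           exp (- \<rho> * measure lborel K) * (\<rho> * measure lborel K) ^ n / fact n)"
      using sp unfolding sprinkle_def by (elim conjE) assumption
    show "(\<lambda>\<omega>. card (S \<omega> \<inter> U N m)) \<in> measurable M (count_space UNIV)"
      using A Ub by blast
    show "measure M {\<omega>\<in>space M. card (S \<omega> \<inter> U N m) = n} =
           exp (- \<rho> * measure lborel (U N m)) * (\<rho> * measure lborel (U N m)) ^ n / fact n"
      using A Ub by blast
  qed
  have Esets: "E N m \<in> sets M" for N m
  proof -
    have "(\<lambda>\<omega>. card (S \<omega> \<inter> U N m)) -` {0} \<inter> space M \<in> sets M"
      by (rule measurable_sets[OF cnt]) auto
    moreover have "(\<lambda>\<omega>. card (S \<omega> \<inter> U N m)) -` {0} \<inter> space M = E N m"
      unfolding E_def by auto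
    ultimately show ?thesis by simp
  qed
  have Ep: "measure M (E N m) = exp (- \<rho> * V) ^ m" for N m
    using pr[of N m 0] unfolding E_def Um by (simp add: exp_of_nat_mult[symmetric] mult.commute mult.left_commute)
  define Z where "Z N = (\<Inter>m. E N m)" for N
  have Zsets: "Z N \<in> sets M" for N unfolding Z_def using Esets by auto
  have Znull: "Z N \<in> null_sets M" for N
  proof -
    have lim: "(\<lambda>m. exp (- \<rho> * V) ^ m) \<longlonglongrightarrow> 0"
      by (rule LIMSEQ_power_zero) (use rho Vpos in simp)
    have "measure M (Z N) \<le> exp (- \<rho> * V) ^ m" for m
    proof -
      have "measure M (Z N) \<le> measure M (E N m)"
        by (rule finite_measure_mono) (auto simp: Z_def Esets)
      then show ?thesis using Ep by simp
    qed
    then have "measure M (Z N) \<le> 0"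
      by (intro LIMSEQ_le_const[OF lim]) auto
    then have "measure M (Z N) = 0" by (simp add: antisym)
    then show ?thesis using Zsets[of N] by (simp add: null_sets_def emeasure_eq_measure)
  qed
  show ?thesis
  proof (rule AE_I')
    show "(\<Union>N. Z N) \<in> null_sets M" using Znull by (rule null_sets_UN)
    show "{\<omega> \<in> space M. \<not> infinite (S \<omega> \<inter> R)} \<subseteq> (\<Union>N. Z N)"
    proof
      fix \<omega> assume w: "\<omega> \<in> {\<omega> \<in> space M. \<not> infinite (S \<omega> \<inter> R)}"
      define T where "T = S \<omega> \<inter> R"
      have fT: "finite T" using w T_def by simp
      define K where "K = (\<Union>t\<in>T. {k. t \<in> ball (c k) r})"
      have "finite K" unfolding K_def
      proof (intro finite_UN_I[OF fT] subsingleton_finite)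
        fix t j k assume "j \<in> {k. t \<in> ball (c k) r}" "k \<in> {k. t \<in> ball (c k) r}"
        then show "j = k" using disj[of j k] by blast
      qed
      then obtain N where N: "K \<subseteq> {..<N}" using finite_nat_bounded by blast
      have "\<omega> \<in> E N m" for m
      proof -
        have "S \<omega> \<inter> U N m = {}"
        proof (rule ccontr)
          assume "S \<omega> \<inter> U N m \<noteq> {}"
          then obtain t k where t: "t \<in> S \<omega>" "k \<in> {N..<N+m}" "t \<in> ball (c k) r"
            unfolding U_def by blast
          then have "t \<in> T" using sub T_def by blast
          then have "k \<in> K" using t K_def by blast
          then show False using N t by auto
        qed
        then show ?thesis using w unfolding E_def by simp
      qed
      then show "\<omega> \<in> (\<Union>N. Z N)" unfolding Z_def by blast
    qed
  qed
qed



lemma region: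
  fixes a b p q e u :: "'a::euclidean_space"
  assumes e: "e \<in> Basis" and ue: "u \<bullet> e = 0" and un: "norm u = 1" and r: "0 < r"
   and pa: "dist p a < r" and qb: "dist q b < r" and g: "(b - a) \<bullet> e - (b - a) \<bullet> u > 15 * r"
   and z: "dist (a + (9 * r + real k) *\<^sub>R e + real k *\<^sub>R u) z < r"
  shows "(\<forall>a'\<in>ball p r. causal_le e a' z) \<and> (\<forall>b'\<in>ball q r. \<not> causal_le e b' z)"
proof -
  define c where "c = a + (9 * r + real k) *\<^sub>R e + real k *\<^sub>R u"
  have ee: "e \<bullet> e = 1" using e by simp
  have eu: "e \<bullet> u = 0" using ue by (simp add: inner_commute)
  have nz: "norm (z - c) < r" using z unfolding c_def by (simp add: dist_norm norm_minus_commute)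
  have A: "causal_le e a' z" if a': "a' \<in> ball p r" for a'
  proof -
    define \<eta> where "\<eta> = (z - c) - (a' - a)"
    have "norm (a' - a) < 2 * r" using a' pa unfolding mem_ball
      using dist_triangle[of a' a p] by (simp add: dist_norm dist_commute norm_minus_commute)
    then have n\<eta>: "norm \<eta> < 3 * r" unfolding \<eta>_def using nz norm_triangle_ineq4[of "z - c" "a' - a"] by linarith
    have he: "\<bar>\<eta> \<bullet> e\<bar> \<le> norm \<eta>" using Basis_le_norm[OF e] by simp
    have d: "z - a' = (9 * r + real k) *\<^sub>R e + real k *\<^sub>R u + \<eta>"
      unfolding \<eta>_def c_def by (simp add: algebra_simps)
    have t: "(z - a') \<bullet> e = 9 * r + real k + \<eta> \<bullet> e"
      unfolding d by (simp add: inner_add_left ee ue)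
    have s: "(z - a') - ((z - a') \<bullet> e) *\<^sub>R e = real k *\<^sub>R u + (\<eta> - (\<eta> \<bullet> e) *\<^sub>R e)"
      unfolding t unfolding d by (simp add: algebra_simps)
    have "norm ((z - a') - ((z - a') \<bullet> e) *\<^sub>R e) \<le> real k + (norm \<eta> + \<bar>\<eta> \<bullet> e\<bar>)"
    proof -
      have "norm (\<eta> - (\<eta> \<bullet> e) *\<^sub>R e) \<le> norm \<eta> + norm ((\<eta> \<bullet> e) *\<^sub>R e)" by (rule norm_triangle_ineq4)
      also have "norm ((\<eta> \<bullet> e) *\<^sub>R e) = \<bar>\<eta> \<bullet> e\<bar>" using e by simp
      finally have "norm (\<eta> - (\<eta> \<bullet> e) *\<^sub>R e) \<le> norm \<eta> + \<bar>\<eta> \<bullet> e\<bar>" .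
      moreover have "norm (real k *\<^sub>R u) = real k" using un by simp
      ultimately show ?thesis unfolding s using norm_triangle_ineq[of "real k *\<^sub>R u" "\<eta> - (\<eta> \<bullet> e) *\<^sub>R e"] by linarith
    qed
    then show ?thesis unfolding causal_le_def using t he n\<eta> by linarith
  qed
  have B: "\<not> causal_le e b' z" if b': "b' \<in> ball q r" for b'
  proof -
    define \<eta> where "\<eta> = (z - c) - (b' - b)"
    have "norm (b' - b) < 2 * r" using b' qb unfolding mem_ball
      using dist_triangle[of b' b q] by (simp add: dist_norm dist_commute norm_minus_commute)
    then have n\<eta>: "norm \<eta> < 3 * r" unfolding \<eta>_def using nz norm_triangle_ineq4[of "z - c" "b' - b"] by linarith
    have he: "\<bar>\<eta> \<bullet> e\<bar> \<le> norm \<eta>" using Basis_le_norm[OF e] by simp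
    have hu: "\<bar>\<eta> \<bullet> u\<bar> \<le> norm \<eta>" using Cauchy_Schwarz_ineq2[of \<eta> u] un by simp
    have d: "z - b' = (9 * r + real k) *\<^sub>R e + real k *\<^sub>R u - (b - a) + \<eta>"
      unfolding \<eta>_def c_def by (simp add: algebra_simps)
    have t: "(z - b') \<bullet> e = 9 * r + real k - (b - a) \<bullet> e + \<eta> \<bullet> e"
      unfolding d by (simp add: inner_add_left inner_diff_left ee ue)
    have su: "((z - b') - ((z - b') \<bullet> e) *\<^sub>R e) \<bullet> u = real k - (b - a) \<bullet> u + \<eta> \<bullet> u"
    proof -
      have uu: "u \<bullet> u = 1" using un by (simp add: dot_square_norm)
      have "(z - b') \<bullet> u = real k - (b - a) \<bullet> u + \<eta> \<bullet> u"
        unfolding d by (simp add: inner_add_left inner_diff_left eu uu)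
      then show ?thesis by (simp add: inner_diff_left eu)
    qed
    have "((z - b') - ((z - b') \<bullet> e) *\<^sub>R e) \<bullet> u \<le> norm ((z - b') - ((z - b') \<bullet> e) *\<^sub>R e)"
      using norm_cauchy_schwarz[of "(z - b') - ((z - b') \<bullet> e) *\<^sub>R e" u] un by simp
    then show ?thesis unfolding causal_le_def using t su he hu n\<eta> g by linarith
  qed
  show ?thesis using A B by blast
qed

lemma region_disj:
  fixes e u :: "'a::euclidean_space"
  assumes e: "e \<in> Basis" and ue: "u \<bullet> e = 0" and r: "r \<le> 1/2" and jk: "j \<noteq> k"
  shows "ball (a + (9 * r + real j) *\<^sub>R e + real j *\<^sub>R u) r \<inter> ball (a + (9 * r + real k) *\<^sub>R e + real k *\<^sub>R u) r = {}"
proof (rule ccontr)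
  let ?c = "\<lambda>k::nat. a + (9 * r + real k) *\<^sub>R e + real k *\<^sub>R u"
  assume "\<not> ?thesis"
  then obtain z where "dist (?c j) z < r" "dist (?c k) z < r" by auto
  then have "norm (?c j - ?c k) < 1" using dist_triangle[of "?c j" "?c k" z] r
    by (simp add: dist_norm dist_commute norm_minus_commute)
  moreover have "(?c j - ?c k) \<bullet> e = real j - real k"
    using e ue by (simp add: inner_add_left inner_diff_left algebra_simps)
  moreover have "\<bar>(?c j - ?c k) \<bullet> e\<bar> \<le> norm (?c j - ?c k)" using Basis_le_norm[OF e] by simp
  ultimately have "\<bar>real j - real k\<bar> < 1" by linarith
  then show False using jk by linarith
qed



lemma direction:
  fixes x y e f :: "'a::euclidean_space"
  assumes e: "e \<in> Basis" and f: "f \<in> Basis" "f \<noteq> e" and xy: "x \<noteq> y"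
  shows "\<exists>a b u. ((a = x \<and> b = y) \<or> (a = y \<and> b = x)) \<and> u \<bullet> e = 0 \<and> norm u = 1 \<and> (b - a) \<bullet> e - (b - a) \<bullet> u > 0"
proof -
  define w where "w = y - x"
  define v where "v = w - (w \<bullet> e) *\<^sub>R e"
  have ee: "e \<bullet> e = 1" using e by simp
  have ve: "v \<bullet> e = 0" unfolding v_def by (simp add: inner_diff_left ee)
  have wv: "w \<bullet> v = v \<bullet> v"
  proof -
    have "w = v + (w \<bullet> e) *\<^sub>R e" unfolding v_def by simp
    then have "w \<bullet> v = (v + (w \<bullet> e) *\<^sub>R e) \<bullet> v" by simp
    also have "\<dots> = v \<bullet> v" by (simp add: inner_add_left inner_commute[of e v] ve)
    finally show ?thesis .
  qed
  show ?thesis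
  proof (cases "v = 0")
    case False
    then have nv: "norm v > 0" by simp
    define u where "u = (1 / norm v) *\<^sub>R v"
    have ue: "u \<bullet> e = 0" unfolding u_def by (simp add: ve)
    have un: "norm u = 1" unfolding u_def using nv by simp
    have wu: "w \<bullet> u = norm v"
      unfolding u_def using nv by (simp add: wv dot_square_norm power2_eq_square)
    show ?thesis
    proof (cases "w \<bullet> e + norm v > 0")
      case True
      have "(y - x) \<bullet> e - (y - x) \<bullet> (- u) > 0" using True wu unfolding w_def by simp
      moreover have "(- u) \<bullet> e = 0" "norm (- u) = 1" using ue un by auto
      ultimately show ?thesis by blast
    next
      case False
      have "(x - y) \<bullet> e - (x - y) \<bullet> u > 0"
      proof -
        have "(x - y) = - w" unfolding w_def by simp
        moreover have "w \<bullet> e < norm v" using False nv by linarith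
        ultimately show ?thesis using wu by (simp add: inner_minus_left)
      qed
      then show ?thesis using ue un by blast
    qed
  next
    case True
    have fe: "f \<bullet> e = 0" using f e by (simp add: inner_not_same_Basis)
    have "w = (w \<bullet> e) *\<^sub>R e" using True unfolding v_def by simp
    then have wf: "w \<bullet> f = 0" by (metis fe inner_commute inner_scaleR_left mult_zero_right)
    have "w \<noteq> 0" using xy unfolding w_def by simp
    then have we: "w \<bullet> e \<noteq> 0" using \<open>w = (w \<bullet> e) *\<^sub>R e\<close> by (metis scaleR_zero_left)
    have nf: "norm f = 1" using f by simp
    show ?thesis
    proof (cases "w \<bullet> e > 0")
      case True
      then have "(y - x) \<bullet> e - (y - x) \<bullet> f > 0" using wf unfolding w_def by simp
      then show ?thesis using fe nf by blast
    next
      case False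
      then have "(x - y) \<bullet> e - (x - y) \<bullet> f > 0" using wf we unfolding w_def
        by (simp add: inner_diff_left inner_diff_right)
      then show ?thesis using fe nf by blast
    qed
  qed
qed

lemma dim1_le:
  fixes e :: "'a::euclidean_space"
  assumes e: "e \<in> Basis" and b1: "Basis = {e}"
  shows "causal_le e p q \<longleftrightarrow> p \<bullet> e \<le> q \<bullet> e"
    and "p \<bullet> e = q \<bullet> e \<Longrightarrow> p = q"
proof -
  have rep: "w = (w \<bullet> e) *\<^sub>R e" for w :: 'a
  proof -
    have "(\<Sum>b\<in>{e}. (w \<bullet> b) *\<^sub>R b) = w" using euclidean_representation[of w] unfolding b1 .
    then show ?thesis by simp
  qed
  show "causal_le e p q \<longleftrightarrow> p \<bullet> e \<le> q \<bullet> e"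
    unfolding causal_le_def using rep[of "q - p"] e by (simp add: inner_diff_left)
  show "p \<bullet> e = q \<bullet> e \<Longrightarrow> p = q" using rep[of p] rep[of q] by metis
qed

lemma dim1_unsym:
  fixes e :: "'a::euclidean_space"
  assumes e: "e \<in> Basis" and b1: "Basis = {e}"
  shows "\<not> local_symmetry (causal_le e) P \<alpha>"
proof
  assume ls: "local_symmetry (causal_le e) P \<alpha>"
  define A where "A = {x\<in>P. \<alpha> x \<noteq> x}"
  have fA: "finite A" and neA: "A \<noteq> {}" and bij: "bij_betw \<alpha> P P"
    and pres: "\<forall>x\<in>P. \<forall>y\<in>P. causal_le e x y \<longleftrightarrow> causal_le e (\<alpha> x) (\<alpha> y)"
    using ls unfolding local_symmetry_def poset_automorphism_def A_def by auto
  define m where "m = Min ((\<lambda>x. x \<bullet> e) ` A)"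
  have "m \<in> (\<lambda>x. x \<bullet> e) ` A" unfolding m_def using fA neA by simp
  then obtain x where x: "x \<in> A" "x \<bullet> e = m" by auto
  have minx: "x \<bullet> e \<le> y \<bullet> e" if "y \<in> A" for y
    using x that fA unfolding m_def by simp
  have xP: "x \<in> P" and ax: "\<alpha> x \<noteq> x" using x A_def by auto
  obtain w where w: "w \<in> P" "\<alpha> w = x" using bij xP by (metis bij_betw_iff_bijections)
  have "w \<noteq> x" using w ax by auto
  then have wA: "w \<in> A" using w A_def by auto
  have axP: "\<alpha> x \<in> P" using bij xP by (metis bij_betw_apply)
  have "\<alpha> (\<alpha> x) \<noteq> \<alpha> x" using bij ax xP axP by (metis bij_betw_iff_bijections)
  then have axA: "\<alpha> x \<in> A" using axP A_def by auto
  have "causal_le e x w" using minx[OF wA] dim1_le[OF e b1] by simp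
  then have "causal_le e (\<alpha> x) x" using pres xP w by metis
  then have "(\<alpha> x) \<bullet> e \<le> x \<bullet> e" using dim1_le[OF e b1] by simp
  moreover have "x \<bullet> e \<le> (\<alpha> x) \<bullet> e" using minx[OF axA] .
  ultimately have "\<alpha> x = x" using dim1_le(2)[OF e b1] by (simp add: antisym)
  then show False using ax by simp
qed

definition Reg :: "'a::euclidean_space \<Rightarrow> 'a \<Rightarrow> 'a \<Rightarrow> real \<Rightarrow> 'a set" where
  "Reg e p q r = {z. (\<forall>a'\<in>ball p r. causal_le e a' z) \<and> (\<forall>b'\<in>ball q r. \<not> causal_le e b' z)}"

definition Good :: "'a::euclidean_space \<Rightarrow> 'a \<Rightarrow> 'a \<Rightarrow> real \<Rightarrow> bool" where
  "Good e p q r \<longleftrightarrow> r > 0 \<and> (\<exists>c::nat \<Rightarrow> 'a. (\<forall>j k. j \<noteq> k \<longrightarrow> ball (c j) r \<inter> ball (c k) r = {})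
     \<and> (\<forall>k. ball (c k) r \<subseteq> Reg e p q r))"

lemma good_AE:
  fixes e p q :: "'a::euclidean_space" and S :: "'w \<Rightarrow> 'a set"
  assumes sp: "sprinkle M \<rho> S" and rho: "\<rho> > 0"
  shows "AE \<omega> in M. Good e p q r \<longrightarrow> infinite (S \<omega> \<inter> Reg e p q r)"
proof (cases "Good e p q r")
  case True
  then obtain c :: "nat \<Rightarrow> 'a" where "r > 0" "\<And>j k. j \<noteq> k \<Longrightarrow> ball (c j) r \<inter> ball (c k) r = {}"
    "\<And>k. ball (c k) r \<subseteq> Reg e p q r" unfolding Good_def by blast
  from prob_infinite[OF sp rho this] show ?thesis by simp
next
  case False
  then show ?thesis by simp
qed

lemma det_part:
  fixes e :: "'a::euclidean_space" and D :: "'a set"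
  assumes e: "e \<in> Basis" and f: "f \<in> Basis" "f \<noteq> e"
    and D: "\<And>X. open X \<Longrightarrow> X \<noteq> {} \<Longrightarrow> \<exists>d\<in>D. d \<in> X"
    and H: "\<forall>(p, q, r) \<in> D \<times> D \<times> \<rat>. Good e p q r \<longrightarrow> infinite (T \<inter> Reg e p q r)"
  shows "total_locally_unsymmetric (causal_le e) T"
  unfolding total_locally_unsymmetric_def k_stable_locally_unsymmetric_def
proof (intro allI impI notI)
  fix k :: nat and F assume F: "F \<subseteq> T \<and> finite F \<and> card F \<le> k"
  assume "\<exists>\<alpha>. local_symmetry (causal_le e) (T - F) \<alpha>"
  then obtain \<alpha> where ls: "local_symmetry (causal_le e) (T - F) \<alpha>" by blast
  define P where "P = T - F"
  define A where "A = {x\<in>P. \<alpha> x \<noteq> x}"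
  have fA: "finite A" and bij: "bij_betw \<alpha> P P"
    and pres: "\<forall>x\<in>P. \<forall>y\<in>P. causal_le e x y \<longleftrightarrow> causal_le e (\<alpha> x) (\<alpha> y)"
    and ex: "\<exists>x\<in>P. \<alpha> x \<noteq> x"
    using ls unfolding local_symmetry_def poset_automorphism_def A_def P_def by auto
  obtain x where xP: "x \<in> P" and ax: "\<alpha> x \<noteq> x" using ex by blast
  define y where "y = \<alpha> x"
  have yP: "y \<in> P" unfolding y_def using bij xP by (metis bij_betw_apply)
  have keyz: "causal_le e x z \<longleftrightarrow> causal_le e y z" if "z \<in> P" "z \<notin> A" for z
  proof -
    have "\<alpha> z = z" using that A_def by auto
    then show ?thesis using pres xP that unfolding y_def by metis
  qed
  obtain a b u where ab: "(a = x \<and> b = y) \<or> (a = y \<and> b = x)" and ue: "u \<bullet> e = 0" and un: "norm u = 1"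
    and g0: "(b - a) \<bullet> e - (b - a) \<bullet> u > 0"
  proof -
    have "x \<noteq> y" using ax y_def by simp
    from direction[OF e f this] obtain a b u where
      "((a = x \<and> b = y) \<or> (a = y \<and> b = x)) \<and> u \<bullet> e = 0 \<and> norm u = 1 \<and> (b - a) \<bullet> e - (b - a) \<bullet> u > 0"
      by (elim exE)
    then show ?thesis using that by (elim conjE)
  qed
  define \<gamma> where "\<gamma> = (b - a) \<bullet> e - (b - a) \<bullet> u"
  have "0 < min (1/2) (\<gamma> / 15)" using g0 \<gamma>_def by simp
  then obtain r where r: "r \<in> \<rat>" "0 < r" "r < min (1/2) (\<gamma> / 15)"
    using Rats_dense_in_real[of 0 "min (1/2) (\<gamma> / 15)"] by blast
  have r2: "r \<le> 1/2" and g: "\<gamma> > 15 * r" using r by auto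
  obtain p where p: "p \<in> D" "p \<in> ball a r" using D[of "ball a r"] r by auto
  obtain q where q: "q \<in> D" "q \<in> ball b r" using D[of "ball b r"] r by auto
  have pa: "dist p a < r" and qb: "dist q b < r" using p q by (auto simp: dist_commute)
  define c where "c = (\<lambda>k::nat. a + (9 * r + real k) *\<^sub>R e + real k *\<^sub>R u)"
  have "Good e p q r" unfolding Good_def
  proof (intro conjI exI[of _ c] allI impI)
    show "0 < r" by fact
    fix j k :: nat assume "j \<noteq> k"
    then show "ball (c j) r \<inter> ball (c k) r = {}" unfolding c_def by (rule region_disj[OF e ue r2])
  next
    fix k show "ball (c k) r \<subseteq> Reg e p q r"
    proof
      fix z assume "z \<in> ball (c k) r"
      then have "dist (a + (9 * r + real k) *\<^sub>R e + real k *\<^sub>R u) z < r" unfolding c_def by simp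
      from region[OF e ue un \<open>0 < r\<close> pa qb _ this] g \<gamma>_def show "z \<in> Reg e p q r"
        unfolding Reg_def by simp
    qed
  qed
  moreover have "(p, q, r) \<in> D \<times> D \<times> \<rat>" using p q r by simp
  ultimately have inf: "infinite (T \<inter> Reg e p q r)" using bspec[OF H] by fastforce
  have finFA: "finite (F \<union> A)" using F fA by simp
  have "\<not> (T \<inter> Reg e p q r \<subseteq> F \<union> A)"
  proof
    assume "T \<inter> Reg e p q r \<subseteq> F \<union> A"
    from infinite_super[OF this inf] finFA show False by simp
  qed
  then obtain z where z: "z \<in> T" "z \<in> Reg e p q r" "z \<notin> F" "z \<notin> A" by blast
  have zP: "z \<in> P" using z P_def by simp
  have "causal_le e a z" using z(2) p unfolding Reg_def by (auto simp: dist_commute)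
  moreover have "\<not> causal_le e b z" using z(2) q unfolding Reg_def by (auto simp: dist_commute)
  moreover note kz = keyz[OF zP z(4)]
  ultimately show False using ab by (elim disjE conjE) simp_all
qed

theorem mainTheorem1:
  fixes M :: "'w measure" and \<rho> :: real and S :: "'w \<Rightarrow> 'a::euclidean_space set" and e :: 'a
  assumes "e \<in> Basis" and "\<rho> > 0" and "sprinkle M \<rho> S"
  shows "AE \<omega> in M. total_locally_unsymmetric (causal_le e) (S \<omega>)"
proof (cases "Basis = {e}")
  case True
  have "total_locally_unsymmetric (causal_le e) T" for T
    unfolding total_locally_unsymmetric_def k_stable_locally_unsymmetric_def
  proof (intro allI impI notI)
    fix k F assume "\<exists>\<alpha>. local_symmetry (causal_le e) (T - F) \<alpha>"
    then obtain \<alpha> where "local_symmetry (causal_le e) (T - F) \<alpha>" by (elim exE)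
    with dim1_unsym[OF assms(1) True, of "T - F" \<alpha>] show False by (rule notE)
  qed
  then show ?thesis by (intro AE_I2)
next
  case False
  have "\<exists>f\<in>Basis. f \<noteq> e"
  proof (rule ccontr)
    assume "\<not> (\<exists>f\<in>Basis. f \<noteq> e)"
    then have "Basis \<subseteq> {e}" by auto
    with assms(1) have "Basis = {e}" by auto
    with False show False by (rule notE)
  qed
  then obtain f where f: "f \<in> Basis" "f \<noteq> e" by (elim bexE)
  obtain D :: "'a set" where cD: "countable D" and D: "\<And>X. open X \<Longrightarrow> X \<noteq> {} \<Longrightarrow> \<exists>d\<in>D. d \<in> X"
    by (rule countable_dense_setE) (rule that; assumption)
  have cI: "countable (D \<times> D \<times> (\<rat> :: real set))" using cD countable_rat by (intro countable_SIGMA)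
  have "AE \<omega> in M. \<forall>(p, q, r) \<in> D \<times> D \<times> \<rat>. Good e p q r \<longrightarrow> infinite (S \<omega> \<inter> Reg e p q r)"
  proof (rule AE_ball_countable'[OF _ cI])
    fix N assume "N \<in> D \<times> D \<times> (\<rat> :: real set)"
    obtain p q r where "N = (p, q, r)" by (cases N) auto
    then show "AE \<omega> in M. (case N of (p, q, r) \<Rightarrow> Good e p q r \<longrightarrow> infinite (S \<omega> \<inter> Reg e p q r))"
      using good_AE[OF assms(3,2), of e p q r] by simp
  qed
  then show ?thesis
  proof (rule AE_mp, intro AE_I2 impI)
    fix \<omega> assume "\<forall>(p, q, r) \<in> D \<times> D \<times> \<rat>. Good e p q r \<longrightarrow> infinite (S \<omega> \<inter> Reg e p q r)"
    from det_part[OF assms(1) f D this] show "total_locally_unsymmetric (causal_le e) (S \<omega>)" .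
  qed
qed

end
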